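(* As Laurent series in $z$, $$\sum_{n\ge0}\binom{2n+2}{n}z^n=\frac{13}{z^2}+3\left(-\frac{z+1}{z^2}+3\frac{1-z-z^2}{z^2(1-z)}\right)\Psi(-z)+\left(4+\frac6z-\frac4{z^2}\right)\Psi^3(-z)+3\left(4z+2-\frac1z-\frac5{z^2}\right)\Psi^5(-z)\quad\text{modulo }27.$$
   Context: $\Psi(z)=\prod_{j\ge0}(1+z^{3^j})$, so $\Psi(-z)=\prod_{j\ge0}(1-z^{3^j})$. Rational functions are expanded as Laurent series in $z$; "modulo $27$" means all coefficients of the difference are divisible by $27$. *)

theory Defs
  imports "HOL-Computational_Algebra.Formal_Laurent_Series"
begin

text \<open>Psi(-z) = prod_{j>=0} (1 - z^(3^j)) as a formal power series over the rationals:
  the infinite product is the limit (in the X-adic topology) of its partial products;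
  the n-th coefficient is already fixed by the partial product over j < n+1,
  since the factors with 3^j > n do not affect coefficients of degree <= n.\<close>
definition Psi_neg :: "rat fps" where
  "Psi_neg = Abs_fps (\<lambda>n. fps_nth (\<Prod>j<Suc n. (1 - fps_X ^ (3 ^ j))) n)"

end

theory Submission
  imports Defs
begin


definition intg :: "rat fps \<Rightarrow> bool" where
  "intg f \<longleftrightarrow> (\<forall>n. f $ n \<in> \<int>)"

lemma intg_add[intro]: "intg f \<Longrightarrow> intg g \<Longrightarrow> intg (f + g)"
  by (auto simp: intg_def)
lemma intg_diff[intro]: "intg f \<Longrightarrow> intg g \<Longrightarrow> intg (f - g)"
  by (auto simp: intg_def)
lemma intg_uminus[intro]: "intg f \<Longrightarrow> intg (- f)"
  by (auto simp: intg_def)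
lemma intg_mult[intro]: "intg f \<Longrightarrow> intg g \<Longrightarrow> intg (f * g)"
  unfolding intg_def fps_mult_nth by (auto intro!: Ints_sum Ints_mult)
lemma intg_one[intro]: "intg 1"
  by (auto simp: intg_def fps_one_nth)
lemma intg_numeral[intro]: "intg (numeral k)"
  by (auto simp: intg_def fps_numeral_nth)
lemma intg_X[intro]: "intg fps_X"
  by (auto simp: intg_def fps_X_nth)
lemma intg_power[intro]: "intg f \<Longrightarrow> intg (f ^ n)"
  by (induction n) auto

lemma intg_div:
  fixes m :: int
  assumes "m \<noteq> 0" "\<forall>n. \<exists>k::int. D $ n = of_int (m * k)"
  shows "\<exists>K. intg K \<and> D = of_int m * K"
proof -
  define K where "K = Abs_fps (\<lambda>n. D $ n / of_int m)"
  have "intg K" unfolding intg_def K_def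
  proof
    fix n obtain k :: int where "D $ n = of_int (m * k)" using assms(2) by blast
    then show "Abs_fps (\<lambda>n. D $ n / of_int m) $ n \<in> \<int>" using assms(1) by simp
  qed
  moreover have "D = of_int m * K"
    by (rule fps_ext) (simp add: K_def fps_of_int[symmetric] assms(1))
  ultimately show ?thesis by blast
qed

lemma intg_obtain:
  assumes "intg f" shows "\<exists>g. \<forall>i. f $ i = of_int (g i)"
proof -
  have "\<forall>i. \<exists>k. f $ i = of_int k" using assms unfolding intg_def Ints_def by blast
  then show ?thesis by (rule choice)
qed

lemma cancel:
  fixes m u :: int
  assumes "intg D" "intg U" "intg W" "D * U = of_int m * W" "U $ 0 = of_int u" "coprime m u"
  shows "\<forall>n. \<exists>k::int. D $ n = of_int (m * k)"
proof
  fix n show "\<exists>k::int. D $ n = of_int (m * k)"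
  proof (induction n rule: less_induct)
    case (less n)
    then obtain kk where kk: "\<And>i. i < n \<Longrightarrow> D $ i = of_int (m * kk i)" by metis
    obtain uu where uu: "\<And>i. U $ i = of_int (uu i)" using intg_obtain[OF assms(2)] by blast
    obtain ww where ww: "\<And>i. W $ i = of_int (ww i)" using intg_obtain[OF assms(3)] by blast
    obtain dd where dd: "\<And>i. D $ i = of_int (dd i)" using intg_obtain[OF assms(1)] by blast
    have "(D * U) $ n = (\<Sum>i=0..n. D$i * U$(n - i))" by (rule fps_mult_nth)
    also have "\<dots> = (\<Sum>i\<in>{0..<n}. D$i * U$(n - i)) + D $ n * U $ 0"
      by (simp add: sum.atLeast0_atMost_Suc_shift atLeastLessThanSuc_atLeastAtMost[symmetric] sum.atLeastLessThan_Suc)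
    also have "(\<Sum>i\<in>{0..<n}. D$i * U$(n - i)) = of_int (m * (\<Sum>i\<in>{0..<n}. kk i * uu (n - i)))"
      by (simp add: kk uu sum_distrib_left mult.assoc)
    finally have "of_int (m * ww n) = of_int (m * (\<Sum>i\<in>{0..<n}. kk i * uu (n - i))) + (of_int (dd n * u) :: rat)"
      using assms(4,5) dd ww by (simp add: fps_of_int[symmetric])
    then have "m * ww n = m * (\<Sum>i\<in>{0..<n}. kk i * uu (n - i)) + dd n * u"
      by (metis of_int_add of_int_eq_iff)
    then have "m dvd dd n * u" by (metis add_diff_cancel_left' dvd_diff dvd_triv_left)
    then have "m dvd dd n" using assms(6) using coprime_dvd_mult_left_iff by blast
    then obtain k where "dd n = m * k" by blast
    then show ?case using dd by metis
  qed
qed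

definition agr :: "nat \<Rightarrow> rat fps \<Rightarrow> rat fps \<Rightarrow> bool" where
  "agr n f g \<longleftrightarrow> (\<forall>i\<le>n. f $ i = g $ i)"

lemma agr_refl[intro]: "agr n f f" by (simp add: agr_def)
lemma agr_add[intro]: "agr n f f' \<Longrightarrow> agr n g g' \<Longrightarrow> agr n (f + g) (f' + g')"
  by (simp add: agr_def)
lemma agr_diff[intro]: "agr n f f' \<Longrightarrow> agr n g g' \<Longrightarrow> agr n (f - g) (f' - g')"
  by (simp add: agr_def)
lemma agr_mult[intro]: "agr n f f' \<Longrightarrow> agr n g g' \<Longrightarrow> agr n (f * g) (f' * g')"
  unfolding agr_def fps_mult_nth by (auto intro!: sum.cong)
lemma agr_power[intro]: "agr n f f' \<Longrightarrow> agr n (f ^ k) (f' ^ k)"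
  by (induction k) auto

definition Phn :: "nat \<Rightarrow> rat fps" where
  "Phn N = (\<Prod>j<N. (1 - fps_X ^ (3 ^ j)))"

lemma Phn_Suc: "Phn (Suc N) = Phn N * (1 - fps_X ^ (3 ^ N))"
  by (simp add: Phn_def)

lemma intg_Phn: "intg (Phn N)"
  by (induction N) (auto simp: Phn_def)

lemma agr_Phn: "M \<le> M' \<Longrightarrow> agr (3^M - 1) (Phn M) (Phn M')"
proof (induction M' rule: dec_induct)
  case base then show ?case by auto
next
  case (step k)
  have "(3::nat)^M \<le> 3^k" using step(1) by (simp add: power_increasing)
  moreover have "0 < (3::nat)^M" by simp
  ultimately have "agr (3^M - 1) 1 (1 - fps_X ^ (3 ^ k))"
    unfolding agr_def by (auto; linarith)
  then have "agr (3^M - 1) (Phn M * 1) (Phn k * (1 - fps_X ^ (3 ^ k)))"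
    using step(3) by blast
  then show ?case by (simp add: Phn_Suc)
qed

lemma less_pow3: "j < (3::nat) ^ j"
  by (induction j) auto

lemma Psi_nth: "Psi_neg $ n = Phn (Suc n) $ n"
  by (simp add: Psi_neg_def Phn_def)

lemma agr_Psi: "agr n Psi_neg (Phn (Suc n))"
  unfolding agr_def
proof (intro allI impI)
  fix i assume "i \<le> n"
  have "agr (3^(Suc i) - 1) (Phn (Suc i)) (Phn (Suc n))" using \<open>i \<le> n\<close> by (intro agr_Phn) simp
  moreover have "i \<le> 3^(Suc i) - 1" using less_pow3[of "Suc i"] by simp
  ultimately show "Psi_neg $ i = Phn (Suc n) $ i" by (simp add: agr_def Psi_nth)
qed

lemma intg_Psi: "intg Psi_neg"
  using intg_Phn unfolding intg_def by (simp add: Psi_nth)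

lemma Psi_0: "Psi_neg $ 0 = 1"
  by (simp add: Psi_nth Phn_def)

lemma cube_id: "(1 - Y)^3 = (1 - Y^3) + 3 * (Y^2 - Y :: rat fps)"
  by (simp add: power3_eq_cube power2_eq_square algebra_simps)

lemma Phn_mod3: "\<exists>h. intg h \<and> (1 - fps_X) * Phn N ^ 2 = (1 - fps_X ^ (3 ^ N)) + 3 * h"
proof (induction N)
  case 0 show ?case by (rule exI[of _ 0]) (auto simp: Phn_def intg_def)
next
  case (Suc N)
  then obtain h where h: "intg h" "(1 - fps_X) * Phn N ^ 2 = (1 - fps_X ^ (3 ^ N)) + 3 * h" by blast
  define Y :: "rat fps" where "Y = fps_X ^ (3 ^ N)"
  have Y3: "Y ^ 3 = fps_X ^ (3 ^ Suc N)" by (simp add: Y_def power_mult[symmetric] mult.commute)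
  have "(1 - fps_X) * Phn (Suc N) ^ 2 = ((1 - fps_X) * Phn N ^ 2) * (1 - Y) ^ 2"
    by (simp add: Phn_Suc Y_def power_mult_distrib)
  also have "\<dots> = ((1 - Y) + 3 * h) * (1 - Y) ^ 2"
    by (simp only: h(2) Y_def)
  also have "\<dots> = (1 - Y) ^ 3 + 3 * (h * (1 - Y)^2)"
    by (simp add: power3_eq_cube power2_eq_square algebra_simps)
  also have "\<dots> = (1 - fps_X ^ (3 ^ Suc N)) + 3 * (Y^2 - Y + h * (1 - Y)^2)"
    by (simp add: cube_id Y3 algebra_simps)
  finally show ?case using h(1) by (intro exI[of _ "Y^2 - Y + h * (1 - Y)^2"] conjI) (unfold Y_def, (intro intg_add intg_diff intg_mult intg_power intg_X intg_one h(1))+)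
qed

lemma t_div3: "\<forall>n. \<exists>k::int. ((1 - 4 * fps_X) * Psi_neg ^ 2 - 1) $ n = of_int (3 * k)"
proof
  fix n
  define N where "N = Suc n"
  obtain h where h: "intg h" "(1 - fps_X) * Phn N ^ 2 = (1 - fps_X ^ (3 ^ N)) + 3 * h"
    using Phn_mod3 by blast
  have "agr n ((1 - 4 * fps_X) * Psi_neg ^ 2 - 1) ((1 - 4 * fps_X) * Phn N ^ 2 - 1)"
    using agr_Psi[of n] unfolding N_def by blast
  then have e1: "((1 - 4 * fps_X) * Psi_neg ^ 2 - 1) $ n = ((1 - 4 * fps_X) * Phn N ^ 2 - 1) $ n"
    by (simp add: agr_def)
  have "(1 - 4 * fps_X) * Phn N ^ 2 - 1 = ((1 - fps_X) * Phn N ^ 2) - 3 * (fps_X * Phn N ^ 2) - 1"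
    by (simp add: algebra_simps)
  also have "\<dots> = ((1 - fps_X ^ (3 ^ N)) + 3 * h) - 3 * (fps_X * Phn N ^ 2) - 1"
    by (simp only: h(2))
  also have "\<dots> = 3 * (h - fps_X * Phn N ^ 2) - fps_X ^ (3 ^ N)"
    by (simp add: algebra_simps)
  finally have eqE: "(1 - 4 * fps_X) * Phn N ^ 2 - 1 = 3 * (h - fps_X * Phn N ^ 2) - fps_X ^ (3 ^ N)" .
  have "((1 - 4 * fps_X) * Phn N ^ 2 - 1) $ n = (3 * (h - fps_X * Phn N ^ 2)) $ n - (fps_X ^ (3 ^ N)) $ n"
    by (simp only: eqE fps_sub_nth)
  moreover have "(fps_X ^ (3 ^ N) :: rat fps) $ n = 0" using less_pow3[of N] unfolding N_def by simp
  ultimately have e2: "((1 - 4 * fps_X) * Phn N ^ 2 - 1) $ n = 3 * (h - fps_X * Phn N ^ 2) $ n"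
    by (simp only: numeral_fps_const fps_mult_left_const_nth)
  have "intg (h - fps_X * Phn N ^ 2)" using h(1) intg_Phn by blast
  then obtain g where "\<And>i. (h - fps_X * Phn N ^ 2) $ i = of_int (g i)" using intg_obtain by blast
  then show "\<exists>k::int. ((1 - 4 * fps_X) * Psi_neg ^ 2 - 1) $ n = of_int (3 * k)"
    using e1 e2 by (intro exI[of _ "g n"]) simp
qed

definition Bs :: "rat fps" where "Bs = Abs_fps (\<lambda>n. of_nat ((2*n) choose n))"
definition Cs :: "rat fps" where "Cs = Abs_fps (\<lambda>n. of_nat ((2*n+2) choose n))"

lemma intg_Bs: "intg Bs" by (simp add: intg_def Bs_def)
lemma intg_Cs: "intg Cs" by (simp add: intg_def Cs_def)

lemma cbin_rec: "(n+1) * ((2*n+2) choose (n+1)) = (4*n+2) * ((2*n) choose n)"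
proof -
  have a: "Suc n * (Suc (2*n+1) choose Suc n) = Suc (2*n+1) * ((2*n+1) choose n)"
    by (rule Suc_times_binomial)
  have b: "Suc n * (Suc (2*n) choose Suc n) = Suc (2*n) * ((2*n) choose n)"
    by (rule Suc_times_binomial)
  have c: "(2*n+1) choose n = (2*n+1) choose (n+1)"
    using binomial_symmetric[of n "2*n+1"] by (simp add: Suc_diff_le)
  have "(n+1) * ((2*n+2) choose (n+1)) = 2 * (Suc n * ((2*n+1) choose (n+1)))"
    using a c by simp
  also have "\<dots> = (4*n+2) * ((2*n) choose n)" using b by simp
  finally show ?thesis .
qed

definition bb :: "nat \<Rightarrow> rat" where "bb n = of_nat ((2*n) choose n)"

lemma Bs_nth: "Bs $ n = bb n" by (simp add: Bs_def bb_def)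

lemma bb_rec: "of_nat (n+1) * bb (n+1) = (4 * of_nat n + 2) * bb n"
proof -
  have "2 * (n+1) = 2*n+2" by simp
  then show ?thesis unfolding bb_def
    using arg_cong[OF cbin_rec[of n], of "of_nat :: nat \<Rightarrow> rat"] by (simp only: of_nat_mult) simp
qed

lemma Bs_ode: "fps_deriv Bs * (1 - 4 * fps_X) = 2 * Bs"
proof (rule fps_ext)
  fix n
  have e: "fps_deriv Bs * (1 - 4 * fps_X) = fps_deriv Bs - fps_const 4 * (fps_X * fps_deriv Bs)"
    by (simp add: algebra_simps numeral_fps_const)
  have e2: "(2 * Bs) $ n = 2 * Bs $ n" by (simp add: numeral_fps_const)
  show "(fps_deriv Bs * (1 - 4 * fps_X)) $ n = (2 * Bs) $ n"
  proof (cases n)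
    case 0 then show ?thesis using bb_rec[of 0] by (simp add: e e2 Bs_nth bb_def)
  next
    case (Suc m)
    have "(fps_deriv Bs * (1 - 4 * fps_X)) $ n = of_nat (n+1) * bb (n+1) - 4 * (of_nat (m+1) * bb (m+1))"
      by (simp only: e fps_sub_nth fps_mult_left_const_nth fps_X_mult_nth fps_deriv_nth Bs_nth) (simp add: Suc)
    then show ?thesis using bb_rec[of n] bb_rec[of m] e2 unfolding Suc
      by (simp add: Bs_nth algebra_simps)
  qed
qed

lemma Bs_sq: "Bs ^ 2 * (1 - 4 * fps_X) = 1"
proof -
  let ?f = "Bs ^ 2 * (1 - 4 * fps_X)"
  have "fps_deriv ?f = 2 * Bs * (fps_deriv Bs * (1 - 4 * fps_X)) - 4 * Bs ^ 2"
    by (simp add: fps_deriv_power algebra_simps power2_eq_square numeral_fps_const)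
  also have "\<dots> = 0" by (simp add: Bs_ode power2_eq_square)
  finally have "fps_deriv ?f = 0" .
  then have "?f = fps_const (?f $ 0)" by (metis fps_deriv_eq_0_iff)
  also have "?f $ 0 = 1" by (simp add: Bs_def power2_eq_square)
  finally show ?thesis by simp
qed

lemma cbin2: "(2*m+4) choose (m+2) = 2 * ((2*m+2) choose m) + 2 * ((2*m+2) choose (m+1))"
proof -
  have s: "(2*m+2) choose (m+2) = (2*m+2) choose m"
    using binomial_symmetric[of m "2*m+2"] by simp
  have "(2*m+4) choose (m+2) = Suc (Suc (2*m+2)) choose Suc (Suc m)" by (simp add: numeral_eq_Suc)
  also have "\<dots> = ((2*m+2) choose m) + 2 * ((2*m+2) choose (m+1)) + ((2*m+2) choose (m+2))"
    by (simp add: numeral_eq_Suc)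
  finally show ?thesis using s by simp
qed

definition cc :: "nat \<Rightarrow> rat" where "cc n = of_nat ((2*n+2) choose n)"
lemma Cs_nth: "Cs $ n = cc n" by (simp add: Cs_def cc_def)

lemma cc_rel: "bb (m+2) = 2 * cc m + 2 * bb (m+1)"
proof -
  have h: "2*(m+2) = 2*m+4" "2*(m+1) = 2*m+2" by simp_all
  have "of_nat ((2*m+4) choose (m+2)) = (of_nat (2 * ((2*m+2) choose m) + 2 * ((2*m+2) choose (m+1))) :: rat)"
    by (subst cbin2) (rule refl)
  then show ?thesis unfolding bb_def cc_def h by (simp only: of_nat_add of_nat_mult of_nat_numeral)
qed

lemma Cs_rel: "4 * fps_X ^ 2 * Cs = (2 - 4 * fps_X) * Bs - 2"
proof (rule fps_ext)
  fix n
  have L: "(4 * fps_X ^ 2 * Cs) $ n = (if n < 2 then 0 else 4 * Cs $ (n - 2))"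
    by (simp only: mult.assoc numeral_fps_const fps_mult_left_const_nth fps_X_power_mult_nth) simp
  have R0: "(2 - 4 * fps_X) * Bs - 2 = fps_const 2 * Bs - fps_const 4 * (fps_X * Bs) - fps_const 2"
    by (simp add: algebra_simps numeral_fps_const)
  have R: "((2 - 4 * fps_X) * Bs - 2) $ n = 2 * Bs $ n - (if n = 0 then 0 else 4 * Bs $ (n - 1)) - (if n = 0 then 2 else 0)"
    by (simp only: R0 fps_sub_nth fps_mult_left_const_nth fps_X_mult_nth) simp
  show "(4 * fps_X ^ 2 * Cs) $ n = ((2 - 4 * fps_X) * Bs - 2) $ n"
  proof (cases n)
    case 0 then show ?thesis using L R by (simp add: Bs_def)
  next
    case (Suc k) note k = this
    show ?thesis
    proof (cases k)
      case 0 then show ?thesis using L R k by (simp add: Bs_def)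
    next
      case (Suc m)
      have n: "n = m + 2" using k Suc by simp
      have "(4 * fps_X ^ 2 * Cs) $ n = 4 * cc m" using L by (simp add: n Cs_nth)
      moreover have "((2 - 4 * fps_X) * Bs - 2) $ n = 2 * bb (m+2) - 4 * bb (m+1)" using R by (simp add: n Bs_nth)
      ultimately show ?thesis using cc_rel[of m] by simp
    qed
  qed
qed



lemma cop16: "coprime (27::int) 16"
proof (rule coprimeI)
  fix d :: int assume "d dvd 27" "d dvd 16"
  then have "d dvd 27*3 - 16*5" by (intro dvd_diff dvd_mult2)
  then show "is_unit d" by simp
qed

lemma cop32: "coprime (27::int) 32"
proof (rule coprimeI)
  fix d :: int assume "d dvd 27" "d dvd 32"
  then have "d dvd 27*(-13) + 32 * 11" by (intro dvd_add dvd_mult2)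
  then show "is_unit d" by simp
qed

lemmas intg_rules = intg_add intg_diff intg_mult intg_power intg_X intg_one intg_numeral intg_uminus

lemma KD:
  fixes F T :: "rat fps"
  defines "X \<equiv> (fps_X :: rat fps)"
  defines "w \<equiv> 1 - 4 * X"
  assumes h: "w * F^2 = 1 + 3 * T"
  shows "w^2 * (32 * (13 * (1 - X) + (6 - 9*X - 6*X^2) * F + (1 - X) * (4*X^2 + 6*X - 4) * F^3
            + 3 * (1 - X) * (4*X^3 + 2*X^2 - X - 5) * F^5)
         - (1 - X) * ((2 - 4*X) * (F * (8 - 12*T + 27*T^2)) - 16))
       = 27 * (16 * (1 - X) * w^2 + F * ((-16 - 16*X + 128*X^2 - 64*X^3 - 128*X^4)
            + T * (-120 + 168*X - 48*X^2) + T^2 * (-162 + 150*X + 12*X^2 + 192*X^3 - 192*X^4)))"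
proof -
  let ?y = "8 - 12*T + 27*T^2"
  have "w^2 * (32 * (13 * (1 - X) + (6 - 9*X - 6*X^2) * F + (1 - X) * (4*X^2 + 6*X - 4) * F^3
            + 3 * (1 - X) * (4*X^3 + 2*X^2 - X - 5) * F^5)
         - (1 - X) * ((2 - 4*X) * (F * ?y) - 16))
     = 432 * (1 - X) * w^2 + F * (w^2 * (32 * (6 - 9*X - 6*X^2) - (1 - X) * (2 - 4*X) * ?y)
         + w * (32 * (1 - X) * (4*X^2 + 6*X - 4)) * (w * F^2)
         + 96 * (1 - X) * (4*X^3 + 2*X^2 - X - 5) * (w * F^2)^2)"
    by algebra
  also have "\<dots> = 432 * (1 - X) * w^2 + F * (w^2 * (32 * (6 - 9*X - 6*X^2) - (1 - X) * (2 - 4*X) * ?y)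
         + w * (32 * (1 - X) * (4*X^2 + 6*X - 4)) * (1 + 3 * T)
         + 96 * (1 - X) * (4*X^3 + 2*X^2 - X - 5) * (1 + 3 * T)^2)"
    by (simp only: h)
  also have "\<dots> = 27 * (16 * (1 - X) * w^2 + F * ((-16 - 16*X + 128*X^2 - 64*X^3 - 128*X^4)
            + T * (-120 + 168*X - 48*X^2) + T^2 * (-162 + 150*X + 12*X^2 + 192*X^3 - 192*X^4)))"
    unfolding w_def by algebra
  finally show ?thesis .
qed

lemma abs1:
  fixes A R Z B Y V X w :: "'a::comm_ring_1"
  assumes a1: "32*A = (1-X)*((2-4*X)*(8*B) - 16)" and a2: "Y - 8*B = 27*V"
    and a3: "w^2*(32*R - (1-X)*((2-4*X)*Y - 16)) = 27*Z"
  shows "(A - R)*(32*w^2) = 27*(-Z - w^2*(1-X)*(2-4*X)*V)"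
proof -
  have Y: "Y = 8*B + 27*V" using a2 by (simp add: algebra_simps)
  have "(A - R)*(32*w^2) = w^2*(32*A) - w^2*(32*R)" by (simp add: algebra_simps)
  also have "\<dots> = w^2*((1-X)*((2-4*X)*(8*B) - 16)) - w^2*(32*R)" by (simp only: a1)
  also have "\<dots> = -(w^2*(32*R - (1-X)*((2-4*X)*(8*B + 27*V) - 16))) - 27*(w^2*(1-X)*(2-4*X)*V)"
    by (simp add: algebra_simps)
  also have "\<dots> = -(w^2*(32*R - (1-X)*((2-4*X)*Y - 16))) - 27*(w^2*(1-X)*(2-4*X)*V)"
    by (simp only: Y)
  also have "\<dots> = -(27*Z) - 27*(w^2*(1-X)*(2-4*X)*V)" by (simp only: a3)
  also have "\<dots> = 27*(-Z - w^2*(1-X)*(2-4*X)*V)" by (simp add: algebra_simps)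
  finally show ?thesis .
qed

lemma abs2:
  fixes A B w Y :: "'a::comm_ring_1"
  assumes "B^2 * w = 1" "w * Y^2 - 64 = 27 * A"
  shows "(Y - 8 * B) * ((Y + 8 * B) * w) = 27 * A"
proof -
  have "(Y - 8 * B) * ((Y + 8 * B) * w) = w * Y^2 - 64 * (B^2 * w)"
    by (simp add: algebra_simps power2_eq_square)
  then show ?thesis using assms by simp
qed

lemma ones_mult: "Abs_fps (\<lambda>_. 1 :: rat) * (1 - fps_X) = 1"
proof (rule fps_ext)
  fix n
  have "(Abs_fps (\<lambda>_. 1 :: rat) * (1 - fps_X)) $ n = Abs_fps (\<lambda>_. 1 :: rat) $ n - (Abs_fps (\<lambda>_. 1 :: rat) * fps_X) $ n"
    by (simp add: algebra_simps)
  then show "(Abs_fps (\<lambda>_. 1 :: rat) * (1 - fps_X)) $ n = (1 :: rat fps) $ n" by simp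
qed

lemma core:
  "\<exists>K. intg K \<and> fps_X^2 * (1 - fps_X) * Cs - (13 * (1 - fps_X) + (6 - 9*fps_X - 6*fps_X^2) * Psi_neg
      + (1 - fps_X) * (4*fps_X^2 + 6*fps_X - 4) * Psi_neg^3
      + 3 * (1 - fps_X) * (4*fps_X^3 + 2*fps_X^2 - fps_X - 5) * Psi_neg^5) = of_int 27 * K"
proof -
  define X :: "rat fps" where "X = fps_X"
  define w where "w = 1 - 4 * X"
  define F where "F = Psi_neg"
  have iF: "intg F" using intg_Psi by (simp add: F_def)
  have "\<exists>K. intg K \<and> (1 - 4 * fps_X) * Psi_neg ^ 2 - 1 = of_int 3 * K"
    by (rule intg_div) (simp_all only: t_div3, simp)
  then obtain T where T: "intg T" "(1 - 4 * fps_X) * Psi_neg ^ 2 - 1 = of_int 3 * T" by blast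
  have h: "w * F^2 = 1 + 3 * T" using T(2) unfolding w_def F_def X_def
    by (simp add: algebra_simps)
  have T0: "T $ 0 = 0"
  proof -
    have "(w * F^2) $ 0 = 1" by (simp add: w_def X_def F_def Psi_0 power2_eq_square)
    then have "(1 + 3 * T) $ 0 = 1" by (simp only: h)
    then show ?thesis by (simp add: numeral_fps_const)
  qed
  define Y where "Y = F * (8 - 12*T + 27*T^2)"
  have iY: "intg Y" unfolding Y_def by (intro intg_rules iF T(1))
  have "w * Y^2 - 64 = (w * F^2) * (8 - 12*T + 27*T^2)^2 - 64" unfolding Y_def by algebra
  also have "\<dots> = (1 + 3 * T) * (8 - 12*T + 27*T^2)^2 - 64" by (simp only: h)
  also have "\<dots> = 27 * (40*T^3 - 45*T^4 + 81*T^5)" by algebra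
  finally have hW: "w * Y^2 - 64 = 27 * (40*T^3 - 45*T^4 + 81*T^5)" .
  have e1: "(Y - 8 * Bs) * ((Y + 8 * Bs) * w) = of_int 27 * (40*T^3 - 45*T^4 + 81*T^5)"
  proof -
    have Bsq: "Bs^2 * w = 1" using Bs_sq by (simp add: w_def X_def)
    show ?thesis by (subst of_int_numeral) (rule abs2[OF Bsq hW])
  qed
  have U0: "((Y + 8 * Bs) * w) $ 0 = of_int 16"
    by (simp add: Y_def w_def X_def F_def Psi_0 T0 Bs_def power2_eq_square)
  have i1: "intg (Y - 8 * Bs)" by (intro intg_rules iY intg_Bs)
  have i2: "intg ((Y + 8 * Bs) * w)" unfolding w_def X_def by (intro intg_rules iY intg_Bs)
  have i3: "intg (40*T^3 - 45*T^4 + 81*T^5)" by (intro intg_rules T(1))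
  have "\<forall>n. \<exists>k::int. (Y - 8 * Bs) $ n = of_int (27 * k)"
    by (rule cancel[OF i1 i2 i3 e1 U0 cop16])
  then have "\<exists>K. intg K \<and> Y - 8 * Bs = of_int 27 * K" by (intro intg_div) simp_all
  then obtain V where V: "intg V" "Y - 8 * Bs = of_int 27 * V" by blast
  have V2: "Y - 8 * Bs = 27 * V" using V(2) by (simp only: of_int_numeral)
  let ?R = "13 * (1 - X) + (6 - 9*X - 6*X^2) * F + (1 - X) * (4*X^2 + 6*X - 4) * F^3
      + 3 * (1 - X) * (4*X^3 + 2*X^2 - X - 5) * F^5"
  let ?G = "X^2 * (1 - X) * Cs - ?R"
  let ?Q = "(-16 - 16*X + 128*X^2 - 64*X^3 - 128*X^4)
            + T * (-120 + 168*X - 48*X^2) + T^2 * (-162 + 150*X + 12*X^2 + 192*X^3 - 192*X^4)"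
  have kd: "w^2 * (32 * ?R - (1 - X) * ((2 - 4*X) * Y - 16)) = 27 * (16 * (1 - X) * w^2 + F * ?Q)"
    unfolding Y_def using KD[OF h[unfolded w_def X_def]] unfolding w_def X_def .
  have c8: "32 * (X^2 * (1 - X) * Cs) = (1 - X) * ((2 - 4*X) * (8 * Bs) - 16)"
  proof -
    have "32 * (X^2 * (1 - X) * Cs) = 8 * (1 - X) * (4 * X^2 * Cs)" by algebra
    also have "\<dots> = 8 * (1 - X) * ((2 - 4 * X) * Bs - 2)" by (simp only: X_def Cs_rel)
    finally show ?thesis by algebra
  qed
  have e2: "?G * (32 * w^2) = of_int 27 * (- (16 * (1 - X) * w^2 + F * ?Q) - w^2 * (1 - X) * (2 - 4*X) * V)"
    by (subst of_int_numeral) (rule abs1[OF c8 V2 kd])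
  have iG: "intg ?G" unfolding X_def by (intro intg_rules iF intg_Cs)
  have j2: "intg (32 * w^2)" unfolding w_def X_def by (intro intg_rules)
  have j3: "intg (- (16 * (1 - X) * w^2 + F * ?Q) - w^2 * (1 - X) * (2 - 4*X) * V)"
    unfolding w_def X_def by (intro intg_rules iF T(1) V(1))
  have j4: "(32 * w^2) $ 0 = of_int 32" by (simp add: w_def X_def power2_eq_square)
  have "\<forall>n. \<exists>k::int. ?G $ n = of_int (27 * k)"
    by (rule cancel[OF iG j2 j3 e2 j4 cop32])
  then have "\<exists>K. intg K \<and> ?G = of_int 27 * K" by (intro intg_div) simp_all
  then obtain K where "intg K" "?G = of_int 27 * K" by blast
  then show ?thesis unfolding X_def F_def by blast
qed

lemma p1: fixes z :: "'a::field" assumes "z \<noteq> 0" "1 - z \<noteq> 0"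
  shows "13 / z^2 * (z^2 * (1 - z)) = 13 * (1 - z)"
  using assms by (simp add: field_simps)
lemma p2: fixes z :: "'a::field" assumes "z \<noteq> 0" "1 - z \<noteq> 0"
  shows "3 * (- (z + 1) / z^2 + 3 * ((1 - z - z^2) / (z^2 * (1 - z)))) * (z^2 * (1 - z)) = 6 - 9*z - 6*z^2"
proof -
  have "3 * (- (z + 1) / z^2 + 3 * ((1 - z - z^2) / (z^2 * (1 - z)))) * (z^2 * (1 - z))
     = 3 * (- (z + 1) * (1 - z) + 3 * (1 - z - z^2))"
    using assms by (simp add: field_simps)
  then show ?thesis by (simp add: algebra_simps power2_eq_square)
qed
lemma p3: fixes z :: "'a::field" assumes "z \<noteq> 0" "1 - z \<noteq> 0"
  shows "(4 + 6 / z - 4 / z^2) * (z^2 * (1 - z)) = (1 - z) * (4*z^2 + 6*z - 4)"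
  using assms by (simp add: field_simps power2_eq_square)
lemma p4: fixes z :: "'a::field" assumes "z \<noteq> 0" "1 - z \<noteq> 0"
  shows "3 * (4*z + 2 - 1/z - 5/z^2) * (z^2 * (1 - z)) = 3 * (1 - z) * (4*z^3 + 2*z^2 - z - 5)"
  using assms by (simp add: field_simps power2_eq_square power3_eq_cube)

lemma distr5: fixes a b c d P D :: "'a::comm_ring_1"
  shows "(a + b * P + c * P^3 + d * P^5) * D = a * D + (b * D) * P + (c * D) * P^3 + (d * D) * P^5"
  by (simp add: algebra_simps)

lemma one_minus_X_fls: "1 - (fls_X :: rat fls) \<noteq> 0"
proof
  assume "1 - (fls_X :: rat fls) = 0"
  then have "fls_nth (1 - (fls_X :: rat fls)) 0 = 0" by simp
  then show False by simp
qed

theorem theorem5p1: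
  fixes z P :: "rat fls"
  assumes "z = fls_X" and "P = fps_to_fls Psi_neg"
  shows "\<forall>n::int. \<exists>k::int.
    fls_nth (fps_to_fls (Abs_fps (\<lambda>n. of_nat ((2*n+2) choose n)))
     - (13 / z^2
        + 3 * (- (z + 1) / z^2 + 3 * ((1 - z - z^2) / (z^2 * (1 - z)))) * P
        + (4 + 6 / z - 4 / z^2) * P^3
        + 3 * (4*z + 2 - 1/z - 5/z^2) * P^5)) n = of_int (27 * k)"
proof
  fix n :: int
  define E where "E = fps_to_fls (Abs_fps (\<lambda>n. of_nat ((2*n+2) choose n)))
     - (13 / z^2
        + 3 * (- (z + 1) / z^2 + 3 * ((1 - z - z^2) / (z^2 * (1 - z)))) * P
        + (4 + 6 / z - 4 / z^2) * P^3
        + 3 * (4*z + 2 - 1/z - 5/z^2) * P^5)"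
  define G where "G = fps_X^2 * (1 - fps_X) * Cs - (13 * (1 - fps_X) + (6 - 9*fps_X - 6*fps_X^2) * Psi_neg
      + (1 - fps_X) * (4*fps_X^2 + 6*fps_X - 4) * Psi_neg^3
      + 3 * (1 - fps_X) * (4*fps_X^3 + 2*fps_X^2 - fps_X - 5) * Psi_neg^5)"
  obtain K where K: "intg K" "G = of_int 27 * K" using core unfolding G_def by blast
  have z0: "z \<noteq> 0" using assms(1) by simp
  have z1: "1 - z \<noteq> 0" using assms(1) one_minus_X_fls by simp
  have FG: "fps_to_fls G = z^2 * (1 - z) * fps_to_fls Cs - (13 * (1 - z) + (6 - 9*z - 6*z^2) * P
      + (1 - z) * (4*z^2 + 6*z - 4) * P^3
      + 3 * (1 - z) * (4*z^3 + 2*z^2 - z - 5) * P^5)"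
    unfolding G_def assms by (simp add: fls_times_fps_to_fls fps_to_fls_power)
  have RR: "(13 / z^2
        + 3 * (- (z + 1) / z^2 + 3 * ((1 - z - z^2) / (z^2 * (1 - z)))) * P
        + (4 + 6 / z - 4 / z^2) * P^3
        + 3 * (4*z + 2 - 1/z - 5/z^2) * P^5) * (z^2 * (1 - z))
      = 13 * (1 - z) + (6 - 9*z - 6*z^2) * P
      + (1 - z) * (4*z^2 + 6*z - 4) * P^3
      + 3 * (1 - z) * (4*z^3 + 2*z^2 - z - 5) * P^5"
    by (simp only: distr5 p1[OF z0 z1] p2[OF z0 z1] p3[OF z0 z1] p4[OF z0 z1])
  have EG: "E * (z^2 * (1 - z)) = fps_to_fls G"
  proof -
    have "E * (z^2 * (1 - z)) = fps_to_fls Cs * (z^2 * (1 - z)) - (13 / z^2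
        + 3 * (- (z + 1) / z^2 + 3 * ((1 - z - z^2) / (z^2 * (1 - z)))) * P
        + (4 + 6 / z - 4 / z^2) * P^3
        + 3 * (4*z + 2 - 1/z - 5/z^2) * P^5) * (z^2 * (1 - z))"
      unfolding E_def Cs_def by (rule left_diff_distrib)
    also have "\<dots> = fps_to_fls Cs * (z^2 * (1 - z)) - (13 * (1 - z) + (6 - 9*z - 6*z^2) * P
      + (1 - z) * (4*z^2 + 6*z - 4) * P^3
      + 3 * (1 - z) * (4*z^3 + 2*z^2 - z - 5) * P^5)" by (simp only: RR)
    also have "\<dots> = fps_to_fls G" unfolding FG by (simp only: mult.commute)
    finally show ?thesis .
  qed
  define H where "H = G * Abs_fps (\<lambda>_. 1 :: rat)"
  have HG: "H * (1 - fps_X) = G" unfolding H_def by (simp add: mult.assoc ones_mult)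
  have "E * z^2 * (1 - z) = fps_to_fls H * (1 - z)"
    using EG HG assms(1) by (metis fls_times_fps_to_fls fps_X_to_fls fps_to_fls_minus fps_to_fls_eq_1_iff mult.assoc)
  then have Ez: "E * z^2 = fps_to_fls H" using z1 by simp
  have "fls_shift 2 (fps_to_fls H) * z^2 = fps_to_fls H"
    unfolding assms(1) fls_X_power_times_conv_shift by simp
  then have "E = fls_shift 2 (fps_to_fls H)" using Ez z0 by (metis mult_right_cancel power_not_zero)
  then have En: "fls_nth E n = (if n + 2 < 0 then 0 else H $ nat (n + 2))" by simp
  have iH: "intg (K * Abs_fps (\<lambda>_. 1 :: rat))"
    using K(1) by (intro intg_mult) (auto simp: intg_def)
  obtain g where g: "\<And>i. (K * Abs_fps (\<lambda>_. 1 :: rat)) $ i = of_int (g i)" using intg_obtain[OF iH] by blast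
  have "H = fps_const 27 * (K * Abs_fps (\<lambda>_. 1 :: rat))" unfolding H_def K(2)
    by (simp add: fps_of_int[symmetric] mult.assoc)
  then have Hn: "\<And>i. H $ i = of_int (27 * g i)" using g by simp
  show "\<exists>k::int. fls_nth E n = of_int (27 * k)"
  proof (cases "n + 2 < 0")
    case True then show ?thesis using En by (intro exI[of _ 0]) simp
  next
    case False then show ?thesis using En Hn by (intro exI[of _ "g (nat (n+2))"]) simp
  qed
qed

end
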